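(* Let $S$ be a $\Gamma$-hemiring, let $\mu$ be a fuzzy h-quasi-ideal of $S$ and let $x\in S$. Then $\langle x,\mu\rangle$ is a fuzzy h-quasi-ideal of $S$.
   Context: A $\Gamma$-hemiring is a pair of additive commutative semigroups with zero $S$ and $\Gamma$ with a map $S\times\Gamma\times S\to S$, $(a,\alpha,b)\mapsto a\alpha b$, such that for all $a,b,c\in S$, $\alpha,\beta\in\Gamma$: $(a+b)\alpha c=a\alpha c+b\alpha c$; $a\alpha(b+c)=a\alpha b+a\alpha c$; $a(\alpha+\beta)b=a\alpha b+a\beta b$; $a\alpha(b\beta c)=(a\alpha b)\beta c$; $0\alpha a=0=a\alpha0$; $a0b=0=b0a$. A fuzzy subset is a map $S\to[0,1]$; $\chi_S$ is the constant function $1$. For fuzzy subsets $\mu,\theta$, the generalized h-product is $(\mu\, o_h\,\theta)(x)=\sup\min_{i}\min\{\mu(a_i),\mu(c_i),\theta(b_i),\theta(d_i)\}$, the supremum over all $n\ge1$, $z,a_i,b_i,c_i,d_i\in S$, $\gamma_i,\delta_i\in\Gamma$ with $x+\sum_{i=1}^n a_i\gamma_ib_i+z=\sum_{i=1}^n c_i\delta_id_i+z$, and $(\mu\, o_h\,\theta)(x)=0$ if no such expression exists. A fuzzy subset $\mu$ is a fuzzy h-quasi-ideal if for all $x,y,a,b,z\in S$: $\mu(x+y)\ge\min\{\mu(x),\mu(y)\}$; $x+a+z=b+z$ implies $\mu(x)\ge\min\{\mu(a),\mu(b)\}$; and $\min\{(\mu\,o_h\,\chi_S)(x),(\chi_S\,o_h\,\mu)(x)\}\le\mu(x)$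 for all $x\in S$. The extension of $\mu$ by $x$ is $\langle x,\mu\rangle(y)=\inf_{s\in S,\ \alpha,\gamma\in\Gamma}\mu(x\alpha s\gamma y)$. *)

theory Defs
  imports Main "HOL.Real"
begin

definition gamma_hemiring :: "('s::comm_monoid_add \<Rightarrow> 'g::comm_monoid_add \<Rightarrow> 's \<Rightarrow> 's) \<Rightarrow> bool" where
  "gamma_hemiring mult \<longleftrightarrow>
     (\<forall>a b c \<alpha>. mult (a + b) \<alpha> c = mult a \<alpha> c + mult b \<alpha> c) \<and>
     (\<forall>a b c \<alpha>. mult a \<alpha> (b + c) = mult a \<alpha> b + mult a \<alpha> c) \<and>
     (\<forall>a b \<alpha> \<beta>. mult a (\<alpha> + \<beta>) b = mult a \<alpha> b + mult a \<beta> b) \<and>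
     (\<forall>a b c \<alpha> \<beta>. mult a \<alpha> (mult b \<beta> c) = mult (mult a \<alpha> b) \<beta> c) \<and>
     (\<forall>a \<alpha>. mult 0 \<alpha> a = 0 \<and> mult a \<alpha> 0 = 0) \<and>
     (\<forall>a b. mult a 0 b = 0 \<and> mult b 0 a = 0)"

definition fuzzy_subset :: "('s \<Rightarrow> real) \<Rightarrow> bool" where
  "fuzzy_subset \<mu> \<longleftrightarrow> (\<forall>x. 0 \<le> \<mu> x \<and> \<mu> x \<le> 1)"

definition chi_S :: "'s \<Rightarrow> real" where
  "chi_S = (\<lambda>_. 1)"

text \<open>Generalized h-product; indices 1..n are rendered as 0..<n.\<close>
definition h_prod :: "('s::comm_monoid_add \<Rightarrow> 'g::comm_monoid_add \<Rightarrow> 's \<Rightarrow> 's) \<Rightarrow> ('s \<Rightarrow> real) \<Rightarrow> ('s \<Rightarrow> real) \<Rightarrow> 's \<Rightarrow> real" where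
  "h_prod mult \<mu> \<theta> x =
     (let V = {Min ((\<lambda>i. min (min (\<mu> (a i)) (\<mu> (c i))) (min (\<theta> (b i)) (\<theta> (d i)))) ` {..<n})
              | (n::nat) z a b c d \<gamma> \<delta>. n \<ge> 1 \<and>
                 x + (\<Sum>i<n. mult (a i) (\<gamma> i) (b i)) + z = (\<Sum>i<n. mult (c i) (\<delta> i) (d i)) + z}
      in if V = {} then 0 else Sup V)"

definition fuzzy_h_quasi_ideal :: "('s::comm_monoid_add \<Rightarrow> 'g::comm_monoid_add \<Rightarrow> 's \<Rightarrow> 's) \<Rightarrow> ('s \<Rightarrow> real) \<Rightarrow> bool" where
  "fuzzy_h_quasi_ideal mult \<mu> \<longleftrightarrow>
     fuzzy_subset \<mu> \<and>
     (\<forall>x y. \<mu> (x + y) \<ge> min (\<mu> x) (\<mu> y)) \<and>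
     (\<forall>x a b z. x + a + z = b + z \<longrightarrow> \<mu> x \<ge> min (\<mu> a) (\<mu> b)) \<and>
     (\<forall>x. min (h_prod mult \<mu> chi_S x) (h_prod mult chi_S \<mu> x) \<le> \<mu> x)"

definition extension :: "('s \<Rightarrow> 'g \<Rightarrow> 's \<Rightarrow> 's) \<Rightarrow> 's \<Rightarrow> ('s \<Rightarrow> real) \<Rightarrow> 's \<Rightarrow> real" where
  "extension mult x \<mu> y = Inf {\<mu> (mult (mult x \<alpha> s) \<gamma> y) | s \<alpha> \<gamma>. True}"

end

theory Submission
  imports Defs
begin

theorem proposition3p10:
  fixes mult :: "'s::comm_monoid_add \<Rightarrow> 'g::comm_monoid_add \<Rightarrow> 's \<Rightarrow> 's"
    and \<mu> :: "'s \<Rightarrow> real" and x :: 's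
  assumes "gamma_hemiring mult"
    and "fuzzy_h_quasi_ideal mult \<mu>"
  shows "fuzzy_h_quasi_ideal mult (extension mult x \<mu>)"
proof -
  define e where "e = extension mult x \<mu>"
  have distr: "\<And>a b c \<alpha>. mult a \<alpha> (b + c) = mult a \<alpha> b + mult a \<alpha> c"
    and assoc: "\<And>a b c \<alpha> \<beta>. mult a \<alpha> (mult b \<beta> c) = mult (mult a \<alpha> b) \<beta> c"
    using assms(1) unfolding gamma_hemiring_def by auto
  have fs: "\<And>y. 0 \<le> \<mu> y \<and> \<mu> y \<le> 1"
    using assms(2) unfolding fuzzy_h_quasi_ideal_def fuzzy_subset_def by auto
  have add: "\<And>a b. \<mu> (a + b) \<ge> min (\<mu> a) (\<mu> b)"
    and hcl: "\<And>y a b z. y + a + z = b + z \<Longrightarrow> \<mu> y \<ge> min (\<mu> a) (\<mu> b)"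
    using assms(2) unfolding fuzzy_h_quasi_ideal_def by blast+
  have bdd: "bdd_below {\<mu> (mult (mult x \<alpha> s) \<gamma> y) | s \<alpha> \<gamma>. True}" for y
    unfolding bdd_below_def using fs by blast
  have e_le: "e y \<le> \<mu> (mult (mult x \<alpha> s) \<gamma> y)" for y \<alpha> s \<gamma>
    unfolding e_def extension_def by (rule cInf_lower[OF _ bdd]) blast
  have e_ge: "c \<le> e y" if "\<And>s \<alpha> \<gamma>. c \<le> \<mu> (mult (mult x \<alpha> s) \<gamma> y)" for c y
    unfolding e_def extension_def by (rule cInf_greatest) (use that in auto)
  have e01: "0 \<le> e y \<and> e y \<le> 1" for y
  proof
    show "0 \<le> e y" by (rule e_ge) (use fs in blast)
    show "e y \<le> 1" using fs[of "mult (mult x 0 0) 0 y"] e_le[of y 0 0 0] by linarith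
  qed
  have eadd: "e (a + b) \<ge> min (e a) (e b)" for a b
  proof (rule e_ge)
    fix s \<alpha> \<gamma>
    have "min (e a) (e b) \<le> min (\<mu> (mult (mult x \<alpha> s) \<gamma> a)) (\<mu> (mult (mult x \<alpha> s) \<gamma> b))"
      using e_le by (meson min.mono)
    also have "\<dots> \<le> \<mu> (mult (mult x \<alpha> s) \<gamma> (a + b))" using add distr by metis
    finally show "min (e a) (e b) \<le> \<mu> (mult (mult x \<alpha> s) \<gamma> (a + b))" .
  qed
  have ehcl: "e y \<ge> min (e a) (e b)" if "y + a + z = b + z" for y a b z
  proof (rule e_ge)
    fix s \<alpha> \<gamma>
    have "mult (mult x \<alpha> s) \<gamma> y + mult (mult x \<alpha> s) \<gamma> a + mult (mult x \<alpha> s) \<gamma> z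
        = mult (mult x \<alpha> s) \<gamma> b + mult (mult x \<alpha> s) \<gamma> z"
      using that distr by metis
    then have "\<mu> (mult (mult x \<alpha> s) \<gamma> y) \<ge> min (\<mu> (mult (mult x \<alpha> s) \<gamma> a)) (\<mu> (mult (mult x \<alpha> s) \<gamma> b))"
      by (rule hcl)
    moreover have "min (e a) (e b) \<le> min (\<mu> (mult (mult x \<alpha> s) \<gamma> a)) (\<mu> (mult (mult x \<alpha> s) \<gamma> b))"
      using e_le by (meson min.mono)
    ultimately show "min (e a) (e b) \<le> \<mu> (mult (mult x \<alpha> s) \<gamma> y)" by linarith
  qed
  have eleft: "e (mult a \<beta> b) \<ge> e b" for a \<beta> b
  proof (rule e_ge)
    fix s \<alpha> \<gamma>
    have "mult (mult x \<alpha> s) \<gamma> (mult a \<beta> b) = mult (mult x \<alpha> (mult s \<gamma> a)) \<beta> b"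
      using assoc by metis
    then show "e b \<le> \<mu> (mult (mult x \<alpha> s) \<gamma> (mult a \<beta> b))" using e_le by metis
  qed
  have esum: "finite I \<Longrightarrow> I \<noteq> {} \<Longrightarrow> (\<forall>i\<in>I. g i \<le> e (f i)) \<Longrightarrow> Min (g ` I) \<le> e (\<Sum>i\<in>I. f i)"
    for I :: "nat set" and g f
  proof (induction I rule: finite_ne_induct)
    case (singleton i) then show ?case by simp
  next
    case (insert i F)
    have "Min (g ` insert i F) = min (g i) (Min (g ` F))" using insert by simp
    also have "\<dots> \<le> min (e (f i)) (e (\<Sum>i\<in>F. f i))" using insert by (meson min.mono insertI1 insertCI)
    also have "\<dots> \<le> e (f i + (\<Sum>i\<in>F. f i))" by (rule eadd)
    finally show ?case using insert by simp
  qed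
  have hp: "h_prod mult chi_S e y \<le> e y" for y
  proof -
    define V where "V = {Min ((\<lambda>i. min (min (chi_S (a i)) (chi_S (c i))) (min (e (b i)) (e (d i)))) ` {..<n})
              | (n::nat) z a b c d \<gamma> \<delta>. n \<ge> 1 \<and>
                 y + (\<Sum>i<n. mult (a i) (\<gamma> i) (b i)) + z = (\<Sum>i<n. mult (c i) (\<delta> i) (d i)) + z}"
    have key: "Min ((\<lambda>i. min (min (chi_S (a i)) (chi_S (c i))) (min (e (b i)) (e (d i)))) ` {..<n}) \<le> e y"
      if n: "n \<ge> 1" and eq:
        "y + (\<Sum>i<n. mult (a i) (\<gamma> i) (b i)) + z = (\<Sum>i<n. mult (c i) (\<delta> i) (d i)) + z"
      for n :: nat and z a b c d \<gamma> \<delta>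
    proof -
      let ?g = "\<lambda>i. min (min (chi_S (a i)) (chi_S (c i))) (min (e (b i)) (e (d i)))"
      have "0 \<in> {..<n}" using n by simp
      then have ne: "{..<n} \<noteq> {}" by blast
      have g1: "\<forall>i\<in>{..<n}. ?g i \<le> e (mult (a i) (\<gamma> i) (b i))"
        using eleft by (smt (verit))
      have g2: "\<forall>i\<in>{..<n}. ?g i \<le> e (mult (c i) (\<delta> i) (d i))"
        using eleft by (smt (verit))
      have "Min (?g ` {..<n}) \<le> e (\<Sum>i<n. mult (a i) (\<gamma> i) (b i))"
        using esum[OF finite_lessThan ne g1] .
      moreover have "Min (?g ` {..<n}) \<le> e (\<Sum>i<n. mult (c i) (\<delta> i) (d i))"
        using esum[OF finite_lessThan ne g2] .
      ultimately show ?thesis using ehcl[OF eq] by linarith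
    qed
    have "v \<le> e y" if "v \<in> V" for v
      using that key unfolding V_def by blast
    then show ?thesis
      unfolding h_prod_def Let_def V_def[symmetric]
      using e01 by (auto intro: cSup_least)
  qed
  show ?thesis
    unfolding e_def[symmetric] fuzzy_h_quasi_ideal_def fuzzy_subset_def
    using e01 eadd ehcl hp by (smt (verit))
qed

end
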